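(* Let PS1 and PS2 be two pure strategies (transition matrices $P_1$, $P_2$ on the finite population set $\mathcal{S}$, as described in the context), where the expected hitting time $m_{PS1}(X)$ of PS1 is finite for every $X\in\mathcal{S}$. Then the following are equivalent: (i) PS2 is complementary to PS1, i.e. there exists $X\in\mathcal{S}_{\mathrm{non}}$ with $\Delta_{PS1}(X)<\Delta_{PS2}(X)$; (ii) there exists a mixed strategy MS derived from PS1 and PS2 such that $m_{MS}(X)\le m_{PS1}(X)$ for every initial population $X\in\mathcal{S}$ and $m_{MS}(X)<m_{PS1}(X)$ for some initial population $X\in\mathcal{S}$. Furthermore, (i) is also equivalent to: (iii) there exists a mixed strategy MS derived from PS1 and PS2 such that the expected runtime of MS is no more than that of PS1 for every initial population $X$, and strictly less than that of PS1 for some initial population $X$.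
   Context: A fitness function $f$ on a finite set is to be maximised; its optimal solutions are its maximisers. A metaheuristic generates a sequence of populations $\Phi_0,\Phi_1,\Phi_2,\dots$ (a population is a finite collection of candidate solutions). Let $\mathcal{S}$ be the finite set of all populations, $\mathcal{S}_{\mathrm{opt}}\subseteq\mathcal{S}$ the populations containing at least one optimal solution, and $\mathcal{S}_{\mathrm{non}}=\mathcal{S}\setminus\mathcal{S}_{\mathrm{opt}}$. The sequence is modelled as a time-homogeneous Markov chain on $\mathcal{S}$ with transition probabilities $P(X,Y)=\Pr(\Phi_{t+1}=Y\mid\Phi_t=X)$, in which every state of $\mathcal{S}_{\mathrm{opt}}$ is absorbing. The expected hitting time $m(X)\in[0,\infty]$ is the expected number of generations until the chain first enters $\mathcal{S}_{\mathrm{opt}}$ when $\Phi_0=X$ (so $m(X)=0$ for $X\in\mathcal{S}_{\mathrm{opt}}$). Each generation uses the same fixed number of fitness evaluations (the same for all algorithms compared), and the expected runtime (expected total number of fitness evaluations until an optimal solution is found) equals the expected hitting time times this number. A pure strategy is a transition matrix (independent of $t$) of this kind. Let PS1 and PS2 be pure strategies with transition matrices $P_1,P_2$ on the same $\mathcal{S}$ (with $\mathcal{S}_{\mathrm{opt}}$ absorbing for both), and expected hitting times $m_{PS1},m_{PS2}$. A mixed strategy MS derived from PS1 and PS2 assigns to each population $X$ probabilities $P_X(PS1)\in[0,1]$ and $P_X(PS2)=1-P_X(PS1)$; when the current population is $X$, PS1 is applied with probability $P_X(PS1)$ and PS2 otherwise, so MS has transition matrix $P_{MS}(X,Y)=P_X(PS1)P_1(X,Y)+P_X(PS2)P_2(X,Y)$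 and expected hitting time $m_{MS}$. With the distance function $d(X)=m_{PS1}(X)$, the drifts are defined for $X\in\mathcal{S}_{\mathrm{non}}$ by $\Delta_{PS1}(X)=d(X)-\sum_{Y\in\mathcal{S}_{\mathrm{non}}}P_1(X,Y)d(Y)$ and $\Delta_{PS2}(X)=d(X)-\sum_{Y\in\mathcal{S}_{\mathrm{non}}}P_2(X,Y)d(Y)$. *)

theory Defs
  imports "HOL-Analysis.Analysis" "HOL-Library.Multiset" "HOL-Library.Extended_Nonnegative_Real"
begin

definition S_opt :: "'x multiset set \<Rightarrow> ('x::finite \<Rightarrow> real) \<Rightarrow> 'x multiset set" where
  "S_opt S f = {X \<in> S. \<exists>x \<in># X. \<forall>y. f y \<le> f x}"

definition S_non :: "'x multiset set \<Rightarrow> ('x::finite \<Rightarrow> real) \<Rightarrow> 'x multiset set" where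
  "S_non S f = S - S_opt S f"

definition pure_strategy ::
  "'x multiset set \<Rightarrow> ('x::finite \<Rightarrow> real) \<Rightarrow> ('x multiset \<Rightarrow> 'x multiset \<Rightarrow> real) \<Rightarrow> bool" where
  "pure_strategy S f P \<longleftrightarrow>
     (\<forall>X\<in>S. \<forall>Y\<in>S. 0 \<le> P X Y) \<and>
     (\<forall>X\<in>S. (\<Sum>Y\<in>S. P X Y) = 1) \<and>
     (\<forall>X\<in>S_opt S f. P X X = 1)"

text \<open>surv S f P t X = Pr(Phi_0, ..., Phi_t all lie in S_non | Phi_0 = X), i.e. Pr(T > t)
  where T is the first hitting time of S_opt.\<close>
fun surv ::
  "'x multiset set \<Rightarrow> ('x::finite \<Rightarrow> real) \<Rightarrow> ('x multiset \<Rightarrow> 'x multiset \<Rightarrow> real)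
   \<Rightarrow> nat \<Rightarrow> 'x multiset \<Rightarrow> real" where
  "surv S f P 0 X = (if X \<in> S_non S f then 1 else 0)"
| "surv S f P (Suc t) X =
     (if X \<in> S_non S f then (\<Sum>Y\<in>S_non S f. P X Y * surv S f P t Y) else 0)"

text \<open>Expected hitting time m(X) = E[T] = sum over t of Pr(T > t), a value in [0, infinity].\<close>
definition hit_time ::
  "'x multiset set \<Rightarrow> ('x::finite \<Rightarrow> real) \<Rightarrow> ('x multiset \<Rightarrow> 'x multiset \<Rightarrow> real)
   \<Rightarrow> 'x multiset \<Rightarrow> ennreal" where
  "hit_time S f P X = (\<Sum>t. ennreal (surv S f P t X))"

text \<open>Expected runtime: expected hitting time times the number N of fitness
  evaluations used per generation.\<close>
definition runtime ::
  "nat \<Rightarrow> 'x multiset set \<Rightarrow> ('x::finite \<Rightarrow> real) \<Rightarrow> ('x multiset \<Rightarrow> 'x multiset \<Rightarrow> real)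
   \<Rightarrow> 'x multiset \<Rightarrow> ennreal" where
  "runtime N S f P X = of_nat N * hit_time S f P X"

definition mixed ::
  "('x multiset \<Rightarrow> real) \<Rightarrow> ('x multiset \<Rightarrow> 'x multiset \<Rightarrow> real)
   \<Rightarrow> ('x multiset \<Rightarrow> 'x multiset \<Rightarrow> real) \<Rightarrow> 'x multiset \<Rightarrow> 'x multiset \<Rightarrow> real" where
  "mixed q P1 P2 X Y = q X * P1 X Y + (1 - q X) * P2 X Y"

text \<open>Drift of strategy P w.r.t. the distance d(X) = m_PS1(X) (assumed finite).\<close>
definition drift ::
  "'x multiset set \<Rightarrow> ('x::finite \<Rightarrow> real) \<Rightarrow> ('x multiset \<Rightarrow> 'x multiset \<Rightarrow> real)
   \<Rightarrow> ('x multiset \<Rightarrow> 'x multiset \<Rightarrow> real) \<Rightarrow> 'x multiset \<Rightarrow> real" where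
  "drift S f P1 P X = enn2real (hit_time S f P1 X)
     - (\<Sum>Y\<in>S_non S f. P X Y * enn2real (hit_time S f P1 Y))"

end

theory Submission
  imports Defs
begin

lemma non_sub: "S_non S f \<subseteq> S" by (auto simp: S_non_def)

lemma surv_nonneg:
  assumes "\<forall>X\<in>S. \<forall>Y\<in>S. 0 \<le> M X Y"
  shows "0 \<le> surv S f M t X"
proof (induction t arbitrary: X)
  case 0 show ?case by simp
next
  case (Suc t)
  show ?case using assms Suc non_sub[of S f]
    by (auto intro!: sum_nonneg mult_nonneg_nonneg)
qed

lemma surv_out: "X \<notin> S_non S f \<Longrightarrow> surv S f M t X = 0"
  by (cases t) auto

lemma hit_out: "X \<notin> S_non S f \<Longrightarrow> hit_time S f M X = 0"
  by (simp add: hit_time_def surv_out)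

lemma surv_Suc_enn:
  assumes nn: "\<forall>X\<in>S. \<forall>Y\<in>S. 0 \<le> M X Y" and X: "X \<in> S_non S f"
  shows "ennreal (surv S f M (Suc t) X) =
    (\<Sum>Y\<in>S_non S f. ennreal (M X Y) * ennreal (surv S f M t Y))"
proof -
  have "ennreal (surv S f M (Suc t) X) = ennreal (\<Sum>Y\<in>S_non S f. M X Y * surv S f M t Y)"
    using X by simp
  also have "\<dots> = (\<Sum>Y\<in>S_non S f. ennreal (M X Y * surv S f M t Y))"
    using nn X non_sub[of S f] surv_nonneg[OF nn]
    by (intro sum_ennreal[symmetric]) (auto intro!: mult_nonneg_nonneg)
  also have "\<dots> = (\<Sum>Y\<in>S_non S f. ennreal (M X Y) * ennreal (surv S f M t Y))"
    using nn X non_sub[of S f] surv_nonneg[OF nn]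
    by (intro sum.cong refl ennreal_mult) auto
  finally show ?thesis .
qed

lemma hit_eq:
  assumes nn: "\<forall>X\<in>S. \<forall>Y\<in>S. 0 \<le> M X Y" and X: "X \<in> S_non S f"
  shows "hit_time S f M X = 1 + (\<Sum>Y\<in>S_non S f. ennreal (M X Y) * hit_time S f M Y)"
proof -
  let ?g = "\<lambda>t. ennreal (surv S f M t X)"
  have "hit_time S f M X = (\<Sum>j. ?g (j+1)) + (\<Sum>j<1. ?g j)"
    unfolding hit_time_def by (rule suminf_offset) simp
  also have "(\<Sum>j<1. ?g j) = 1" using X by simp
  also have "(\<lambda>j. ?g (j+1)) = (\<lambda>j. \<Sum>Y\<in>S_non S f. ennreal (M X Y) * ennreal (surv S f M j Y))"
    using surv_Suc_enn[OF nn X] by simp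
  also have "(\<Sum>j. \<Sum>Y\<in>S_non S f. ennreal (M X Y) * ennreal (surv S f M j Y))
      = (\<Sum>Y\<in>S_non S f. \<Sum>j. ennreal (M X Y) * ennreal (surv S f M j Y))"
    by (rule suminf_sum) simp
  also have "\<dots> = (\<Sum>Y\<in>S_non S f. ennreal (M X Y) * hit_time S f M Y)"
    by (simp add: hit_time_def)
  finally show ?thesis by (simp add: add.commute)
qed

lemma hit_le:
  fixes d :: "'x::finite multiset \<Rightarrow> ennreal"
  assumes nn: "\<forall>X\<in>S. \<forall>Y\<in>S. 0 \<le> M X Y"
    and H: "\<forall>X\<in>S_non S f. 1 + (\<Sum>Y\<in>S_non S f. ennreal (M X Y) * d Y) \<le> d X"
    and X: "X \<in> S_non S f"
  shows "hit_time S f M X \<le> d X"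
proof -
  have "\<forall>X\<in>S_non S f. (\<Sum>t<n. ennreal (surv S f M t X)) \<le> d X" for n
  proof (induction n)
    case 0 show ?case by simp
  next
    case (Suc n)
    show ?case
    proof
      fix X assume X: "X \<in> S_non S f"
      have "(\<Sum>t<Suc n. ennreal (surv S f M t X)) = ennreal (surv S f M 0 X) + (\<Sum>t<n. ennreal (surv S f M (Suc t) X))"
        by (rule sum.lessThan_Suc_shift)
      also have "\<dots> = 1 + (\<Sum>t<n. \<Sum>Y\<in>S_non S f. ennreal (M X Y) * ennreal (surv S f M t Y))"
        using X surv_Suc_enn[OF nn X] by simp
      also have "\<dots> = 1 + (\<Sum>Y\<in>S_non S f. ennreal (M X Y) * (\<Sum>t<n. ennreal (surv S f M t Y)))"
        by (simp add: sum.swap[of _ "{..<n}"] sum_distrib_left)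
      also have "\<dots> \<le> 1 + (\<Sum>Y\<in>S_non S f. ennreal (M X Y) * d Y)"
        using Suc.IH by (intro add_mono sum_mono mult_left_mono) auto
      also have "\<dots> \<le> d X" using H X by auto
      finally show "(\<Sum>t<Suc n. ennreal (surv S f M t X)) \<le> d X" .
    qed
  qed
  then show ?thesis using X by (simp add: hit_time_def suminf_eq_SUP SUP_least)
qed

lemma real_conv:
  assumes "\<forall>Y\<in>A. 0 \<le> a Y \<and> 0 \<le> v Y"
  shows "1 + (\<Sum>Y\<in>A. ennreal (a Y) * ennreal (v Y)) = ennreal (1 + (\<Sum>Y\<in>A. a Y * v Y))"
proof -
  have "(\<Sum>Y\<in>A. ennreal (a Y) * ennreal (v Y)) = (\<Sum>Y\<in>A. ennreal (a Y * v Y))"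
    using assms by (intro sum.cong refl ennreal_mult[symmetric]) auto
  also have "\<dots> = ennreal (\<Sum>Y\<in>A. a Y * v Y)"
    using assms by (intro sum_ennreal) auto
  moreover have "0 \<le> (\<Sum>Y\<in>A. a Y * v Y)" using assms by (auto intro!: sum_nonneg)
  ultimately show ?thesis by (simp add: ennreal_plus)
qed


theorem mainTheorem1:
  fixes S :: "'x::finite multiset set" and f :: "'x \<Rightarrow> real"
    and P1 P2 :: "'x multiset \<Rightarrow> 'x multiset \<Rightarrow> real" and N :: nat
  assumes "finite S"
    and "pure_strategy S f P1" and "pure_strategy S f P2"
    and "\<forall>X\<in>S. hit_time S f P1 X < \<infinity>"
    and "N > 0"
  shows "((\<exists>X\<in>S_non S f. drift S f P1 P1 X < drift S f P1 P2 X) \<longleftrightarrow>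
          (\<exists>q. (\<forall>X\<in>S. 0 \<le> q X \<and> q X \<le> 1) \<and>
               (\<forall>X\<in>S. hit_time S f (mixed q P1 P2) X \<le> hit_time S f P1 X) \<and>
               (\<exists>X\<in>S. hit_time S f (mixed q P1 P2) X < hit_time S f P1 X)))
       \<and> ((\<exists>X\<in>S_non S f. drift S f P1 P1 X < drift S f P1 P2 X) \<longleftrightarrow>
          (\<exists>q. (\<forall>X\<in>S. 0 \<le> q X \<and> q X \<le> 1) \<and>
               (\<forall>X\<in>S. runtime N S f (mixed q P1 P2) X \<le> runtime N S f P1 X) \<and>
               (\<exists>X\<in>S. runtime N S f (mixed q P1 P2) X < runtime N S f P1 X)))"
proof -
  let ?non = "S_non S f"
  have fin: "finite ?non" using assms(1) non_sub[of S f] finite_subset by blast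
  have P1nn: "\<forall>X\<in>S. \<forall>Y\<in>S. 0 \<le> P1 X Y" and P2nn: "\<forall>X\<in>S. \<forall>Y\<in>S. 0 \<le> P2 X Y"
    using assms(2,3) by (auto simp: pure_strategy_def)
  define m where "m X = enn2real (hit_time S f P1 X)" for X
  have m_nn: "0 \<le> m X" for X by (simp add: m_def)
  have hm: "hit_time S f P1 X = ennreal (m X)" if "X \<in> S" for X
    using assms(4) that by (simp add: m_def)
  have inS: "X \<in> S" if "X \<in> ?non" for X using that non_sub[of S f] by blast
  have m_eq: "m X = 1 + (\<Sum>Y\<in>?non. P1 X Y * m Y)" if X: "X \<in> ?non" for X
  proof -
    have "ennreal (m X) = 1 + (\<Sum>Y\<in>?non. ennreal (P1 X Y) * hit_time S f P1 Y)"
      using hit_eq[OF P1nn X] hm[OF inS[OF X]] by simp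
    also have "\<dots> = 1 + (\<Sum>Y\<in>?non. ennreal (P1 X Y) * ennreal (m Y))"
      using hm inS by simp
    also have "\<dots> = ennreal (1 + (\<Sum>Y\<in>?non. P1 X Y * m Y))"
      using P1nn inS X m_nn by (intro real_conv) auto
    finally show ?thesis using m_nn P1nn inS X
      by (subst (asm) ennreal_inj) (auto intro!: add_nonneg_nonneg sum_nonneg)
  qed
  have d1: "drift S f P1 P1 X = 1" if "X \<in> ?non" for X
    using m_eq[OF that] by (simp add: drift_def m_def[symmetric])
  have d2: "drift S f P1 P2 X = m X - (\<Sum>Y\<in>?non. P2 X Y * m Y)" for X
    by (simp add: drift_def m_def[symmetric])
  have mixnn: "\<forall>X\<in>S. \<forall>Y\<in>S. 0 \<le> mixed q P1 P2 X Y" if q: "\<forall>X\<in>S. 0 \<le> q X \<and> q X \<le> 1" for q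
    using q P1nn P2nn by (auto simp: mixed_def intro!: add_nonneg_nonneg mult_nonneg_nonneg)
  have main: "(\<exists>X\<in>?non. drift S f P1 P1 X < drift S f P1 P2 X) \<longleftrightarrow>
          (\<exists>q. (\<forall>X\<in>S. 0 \<le> q X \<and> q X \<le> 1) \<and>
               (\<forall>X\<in>S. hit_time S f (mixed q P1 P2) X \<le> hit_time S f P1 X) \<and>
               (\<exists>X\<in>S. hit_time S f (mixed q P1 P2) X < hit_time S f P1 X))"
  proof
    assume "\<exists>X\<in>?non. drift S f P1 P1 X < drift S f P1 P2 X"
    then obtain X0 where X0: "X0 \<in> ?non" and lt: "1 + (\<Sum>Y\<in>?non. P2 X0 Y * m Y) < m X0"
      using d1 d2 by force
    define q where "q X = (if X = X0 then 0 else 1::real)" for X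
    let ?M = "mixed q P1 P2"
    have q01: "\<forall>X\<in>S. 0 \<le> q X \<and> q X \<le> 1" by (simp add: q_def)
    have Mdef: "?M X Y = (if X = X0 then P2 X Y else P1 X Y)" for X Y
      by (simp add: mixed_def q_def)
    have Mnn: "\<forall>X\<in>S. \<forall>Y\<in>S. 0 \<le> ?M X Y" using mixnn[OF q01] .
    have conv: "1 + (\<Sum>Y\<in>?non. ennreal (?M X Y) * ennreal (m Y)) = ennreal (1 + (\<Sum>Y\<in>?non. ?M X Y * m Y))"
      if "X \<in> ?non" for X
      using Mnn inS that m_nn by (intro real_conv) auto
    have H: "\<forall>X\<in>?non. 1 + (\<Sum>Y\<in>?non. ennreal (?M X Y) * ennreal (m Y)) \<le> ennreal (m X)"
    proof
      fix X assume X: "X \<in> ?non"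
      have "1 + (\<Sum>Y\<in>?non. ?M X Y * m Y) \<le> m X"
        using m_eq[OF X] lt by (cases "X = X0") (auto simp: Mdef)
      then show "1 + (\<Sum>Y\<in>?non. ennreal (?M X Y) * ennreal (m Y)) \<le> ennreal (m X)"
        using conv[OF X] by (simp add: ennreal_leI)
    qed
    have le: "hit_time S f ?M X \<le> hit_time S f P1 X" if "X \<in> S" for X
    proof (cases "X \<in> ?non")
      case True then show ?thesis using hit_le[OF Mnn H True] hm[OF that] by simp
    next
      case False then show ?thesis by (simp add: hit_out)
    qed
    have "hit_time S f ?M X0 = 1 + (\<Sum>Y\<in>?non. ennreal (?M X0 Y) * hit_time S f ?M Y)"
      by (rule hit_eq[OF Mnn X0])
    also have "\<dots> \<le> 1 + (\<Sum>Y\<in>?non. ennreal (?M X0 Y) * ennreal (m Y))"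
      using le inS hm by (intro add_mono sum_mono mult_left_mono) auto
    also have "\<dots> = ennreal (1 + (\<Sum>Y\<in>?non. P2 X0 Y * m Y))"
      using conv[OF X0] by (simp add: Mdef)
    also have "\<dots> < ennreal (m X0)"
    proof -
      have "0 \<le> (\<Sum>Y\<in>?non. P2 X0 Y * m Y)"
        using m_nn P2nn inS X0 by (auto intro!: sum_nonneg)
      then have "0 < m X0" using lt by linarith
      then show ?thesis using lt by (intro ennreal_lessI)
    qed
    also have "\<dots> = hit_time S f P1 X0" using hm inS X0 by simp
    finally have "hit_time S f ?M X0 < hit_time S f P1 X0" .
    then show "\<exists>q. (\<forall>X\<in>S. 0 \<le> q X \<and> q X \<le> 1) \<and>
               (\<forall>X\<in>S. hit_time S f (mixed q P1 P2) X \<le> hit_time S f P1 X) \<and>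
               (\<exists>X\<in>S. hit_time S f (mixed q P1 P2) X < hit_time S f P1 X)"
      using q01 le inS X0 by blast
  next
    assume "\<exists>q. (\<forall>X\<in>S. 0 \<le> q X \<and> q X \<le> 1) \<and>
               (\<forall>X\<in>S. hit_time S f (mixed q P1 P2) X \<le> hit_time S f P1 X) \<and>
               (\<exists>X\<in>S. hit_time S f (mixed q P1 P2) X < hit_time S f P1 X)"
    then obtain q where q01: "\<forall>X\<in>S. 0 \<le> q X \<and> q X \<le> 1"
      and le: "\<forall>X\<in>S. hit_time S f (mixed q P1 P2) X \<le> hit_time S f P1 X"
      and strict: "\<exists>X\<in>S. hit_time S f (mixed q P1 P2) X < hit_time S f P1 X" by blast
    show "\<exists>X\<in>?non. drift S f P1 P1 X < drift S f P1 P2 X"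
    proof (rule ccontr)
      assume "\<not> ?thesis"
      then have sub2: "m X - 1 \<le> (\<Sum>Y\<in>?non. P2 X Y * m Y)" if "X \<in> ?non" for X
        using that d1 d2 by force
      let ?M = "mixed q P1 P2"
      have Mnn: "\<forall>X\<in>S. \<forall>Y\<in>S. 0 \<le> ?M X Y" using mixnn[OF q01] .
      define mm where "mm X = enn2real (hit_time S f ?M X)" for X
      have mm_nn: "0 \<le> mm X" for X by (simp add: mm_def)
      have fin2: "hit_time S f ?M X < \<infinity>" if "X \<in> S" for X
      proof -
        have "hit_time S f ?M X \<le> hit_time S f P1 X" using le that by blast
        also have "\<dots> = ennreal (m X)" by (rule hm[OF that])
        also have "\<dots> < \<infinity>" by simp
        finally show ?thesis .
      qed
      have hmm: "hit_time S f ?M X = ennreal (mm X)" if "X \<in> S" for X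
        using fin2[OF that] by (simp add: mm_def)
      have mm_le: "mm X \<le> m X" if "X \<in> S" for X
      proof -
        have "ennreal (mm X) = hit_time S f ?M X" by (rule hmm[OF that, symmetric])
        also have "\<dots> \<le> hit_time S f P1 X" using le that by blast
        also have "\<dots> = ennreal (m X)" by (rule hm[OF that])
        finally show ?thesis using m_nn[of X] ennreal_le_iff by blast
      qed
      have mm_eq: "mm X = 1 + (\<Sum>Y\<in>?non. ?M X Y * mm Y)" if X: "X \<in> ?non" for X
      proof -
        have "ennreal (mm X) = 1 + (\<Sum>Y\<in>?non. ennreal (?M X Y) * hit_time S f ?M Y)"
          using hit_eq[OF Mnn X] hmm[OF inS[OF X]] by simp
        also have "\<dots> = 1 + (\<Sum>Y\<in>?non. ennreal (?M X Y) * ennreal (mm Y))"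
          using hmm inS by simp
        also have "\<dots> = ennreal (1 + (\<Sum>Y\<in>?non. ?M X Y * mm Y))"
          using Mnn inS X mm_nn by (intro real_conv) auto
        finally show ?thesis using mm_nn Mnn inS X
          by (subst (asm) ennreal_inj) (auto intro!: add_nonneg_nonneg sum_nonneg mult_nonneg_nonneg)
      qed
      have m_sub: "m X \<le> 1 + (\<Sum>Y\<in>?non. ?M X Y * m Y)" if X: "X \<in> ?non" for X
      proof -
        have e: "(\<Sum>Y\<in>?non. ?M X Y * m Y) = q X * (\<Sum>Y\<in>?non. P1 X Y * m Y) + (1 - q X) * (\<Sum>Y\<in>?non. P2 X Y * m Y)"
        proof -
          have "(\<Sum>Y\<in>?non. ?M X Y * m Y) = (\<Sum>Y\<in>?non. q X * (P1 X Y * m Y) + (1 - q X) * (P2 X Y * m Y))"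
            by (intro sum.cong refl) (simp add: mixed_def algebra_simps)
          also have "\<dots> = q X * (\<Sum>Y\<in>?non. P1 X Y * m Y) + (1 - q X) * (\<Sum>Y\<in>?non. P2 X Y * m Y)"
            by (simp add: sum.distrib sum_distrib_left)
          finally show ?thesis .
        qed
        have "(1 - q X) * (m X - 1) \<le> (1 - q X) * (\<Sum>Y\<in>?non. P2 X Y * m Y)"
          using q01 inS[OF X] sub2[OF X] by (intro mult_left_mono) auto
        then show ?thesis using e m_eq[OF X] by (simp add: algebra_simps)
      qed
      define e where "e X = m X - mm X" for X
      have e_nn: "0 \<le> e X" if "X \<in> ?non" for X using mm_le inS that by (simp add: e_def)
      have e_sub: "e X \<le> (\<Sum>Y\<in>?non. ?M X Y * e Y)" if X: "X \<in> ?non" for X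
        using m_sub[OF X] mm_eq[OF X]
        by (simp add: e_def right_diff_distrib sum_subtractf)
      define C where "C = (\<Sum>Y\<in>?non. e Y)"
      have eC: "e Y \<le> C" if "Y \<in> ?non" for Y
        unfolding C_def using fin that e_nn by (intro member_le_sum) auto
      have ind: "\<forall>X\<in>?non. e X \<le> C * surv S f ?M n X" for n
      proof (induction n)
        case 0 show ?case using eC by simp
      next
        case (Suc n)
        show ?case
        proof
          fix X assume X: "X \<in> ?non"
          have "e X \<le> (\<Sum>Y\<in>?non. ?M X Y * e Y)" by (rule e_sub[OF X])
          also have "\<dots> \<le> (\<Sum>Y\<in>?non. ?M X Y * (C * surv S f ?M n Y))"
            using Suc.IH Mnn inS X by (intro sum_mono mult_left_mono) auto
          also have "\<dots> = C * surv S f ?M (Suc n) X"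
            using X by (simp add: sum_distrib_left algebra_simps)
          finally show "e X \<le> C * surv S f ?M (Suc n) X" .
        qed
      qed
      have e0: "e X \<le> 0" if X: "X \<in> ?non" for X
      proof -
        have "(\<Sum>t. ennreal (surv S f ?M t X)) \<noteq> top"
          using fin2[OF inS[OF X]] by (simp add: hit_time_def)
        then have "summable (\<lambda>t. surv S f ?M t X)"
          using surv_nonneg[OF Mnn] by (intro summable_suminf_not_top) auto
        then have "(\<lambda>t. surv S f ?M t X) \<longlonglongrightarrow> 0" by (rule summable_LIMSEQ_zero)
        then have "(\<lambda>t. C * surv S f ?M t X) \<longlonglongrightarrow> C * 0" by (intro tendsto_mult tendsto_const)
        then have "(\<lambda>t. C * surv S f ?M t X) \<longlonglongrightarrow> 0" by simp
        moreover have "\<exists>N. \<forall>n\<ge>N. e X \<le> C * surv S f ?M n X" using ind X by blast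
        ultimately show ?thesis by (rule LIMSEQ_le_const)
      qed
      have eqs: "hit_time S f ?M X = hit_time S f P1 X" if "X \<in> S" for X
      proof (cases "X \<in> ?non")
        case True
        then have "mm X = m X" using e0[OF True] e_nn[OF True] by (simp add: e_def)
        then show ?thesis using hm[OF that] hmm[OF that] by simp
      next
        case False then show ?thesis by (simp add: hit_out)
      qed
      show False using strict eqs by auto
    qed
  qed
  have cN: "(of_nat N :: ennreal) \<noteq> 0" "(of_nat N :: ennreal) \<noteq> top" using assms(5) by auto
  have kle: "(of_nat N * a \<le> of_nat N * b) = (a \<le> b)" for a b :: ennreal
    using ennreal_mult_le_mult_iff[OF cN] .
  have klt: "(of_nat N * a < of_nat N * b) = (a < b)" for a b :: ennreal
    using kle[of b a] by (simp add: not_le[symmetric])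
  show ?thesis using main by (simp add: runtime_def kle klt)
qed

end
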